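(* Let $X$ be a random variable with CDF $F$ and mean $\mu=\mathbb{E}X$, and let $1\le j\le m$ be integers. Each of the following conditions implies $\mathbb{E}X_{j:m}\leq\mu$: 1. $F$ is in the DD class (i.e. $F^{-1}$ is convex on $(0,1)$) and $\frac12\geq\frac{j}{m+1}$; 2. $F$ is DLOR (i.e. $F^{-1}\circ L$ is convex on $\mathbb{R}$, where $L(x)=\frac1{1+e^{-x}}$) and $\psi(j)-\psi(m-j+1)\leq 0$; 3. $F$ is DHR (i.e. $F^{-1}\circ\mathcal{E}$ is convex on $(0,\infty)$, where $\mathcal{E}(x)=1-e^{-x}$) and $1\geq\sum_{k=m-j+1}^{m}\frac1k$; 4. $F$ is DRHR (i.e. $F^{-1}\circ\mathcal{E}_-$ is convex on $(-\infty,0)$, where $\mathcal{E}_-(x)=e^{x}$ for $x\le 0$) and $1\leq\sum_{k=j}^{m}\frac1k$.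
   Context: $F^{-1}(p)=\inf\{x:F(x)\ge p\}$ is the quantile function. $X_{j:m}$ is the $j$-th order statistic of an i.i.d. sample of size $m$ from $F$. $\psi$ denotes the digamma function. DD: decreasing density (concave CDF); DLOR: decreasing log-odds rate (concave log-odds); DHR: decreasing hazard rate (concave $-\log(1-F)$); DRHR: decreasing reversed hazard rate ($\log F$ concave); the precise definitions used are those given in the claim in terms of the quantile function. *)

theory Defs
  imports "HOL-Probability.Probability"
begin

definition quantile :: "(real \<Rightarrow> real) \<Rightarrow> real \<Rightarrow> real" where
  "quantile F p = Inf {x. F x \<ge> p}"

definition order_stat :: "nat \<Rightarrow> nat \<Rightarrow> (nat \<Rightarrow> real) \<Rightarrow> real" where
  "order_stat m j x = sort (map x [0..<m]) ! (j - 1)"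

definition logistic :: "real \<Rightarrow> real" where
  "logistic x = 1 / (1 + exp (- x))"

end

theory Submission
  imports Defs
begin


definition bpoly :: "nat \<Rightarrow> nat \<Rightarrow> real \<Rightarrow> real" where
  "bpoly m k u = real m * real ((m - 1) choose (k - 1)) * u ^ (k - 1) * (1 - u) ^ (m - k)"

definition Bpoly :: "nat \<Rightarrow> nat \<Rightarrow> real \<Rightarrow> real" where
  "Bpoly m k p = (\<Sum>i = k..m. real (m choose i) * p ^ i * (1 - p) ^ (m - i))"

lemma bpoly_big: "m \<ge> 1 \<Longrightarrow> bpoly m (Suc m) u = 0"
  by (simp add: bpoly_def)

lemma term_deriv:
  assumes "1 \<le> i" "i \<le> m"
  shows "((\<lambda>u. real (m choose i) * u ^ i * (1 - u) ^ (m - i)) has_real_derivative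
          (bpoly m i u - bpoly m (Suc i) u)) (at u)"
proof -
  have d: "((\<lambda>u. real (m choose i) * u ^ i * (1 - u) ^ (m - i)) has_real_derivative
     real (m choose i) * (real i * u ^ (i - 1) * (1 - u) ^ (m - i) - u ^ i * (real (m - i) * (1 - u) ^ (m - i - 1))))
     (at u)"
    by (auto intro!: derivative_eq_intros simp: algebra_simps)
  have e1: "real (m choose i) * real i = real m * real ((m - 1) choose (i - 1))"
    using times_binomial_minus1_eq[of i m] assms by (metis of_nat_mult mult.commute less_le_trans zero_less_one)
  have e2: "real (m choose i) * real (m - i) = real m * real ((m - 1) choose i)"
    using binomial_absorb_comp[of m i] by (metis of_nat_mult mult.commute)
  have "real (m choose i) * (real i * u ^ (i - 1) * (1 - u) ^ (m - i) - u ^ i * (real (m - i) * (1 - u) ^ (m - i - 1)))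
      = (real (m choose i) * real i) * u ^ (i - 1) * (1 - u) ^ (m - i)
        - (real (m choose i) * real (m - i)) * u ^ i * (1 - u) ^ (m - i - 1)"
    by (simp add: algebra_simps)
  also have "\<dots> = bpoly m i u - bpoly m (Suc i) u"
    unfolding e1 e2 bpoly_def by simp
  finally show ?thesis using d by simp
qed

lemma Bpoly_deriv:
  assumes "1 \<le> k" "k \<le> m"
  shows "(Bpoly m k has_real_derivative bpoly m k u) (at u)"
proof -
  have "((\<lambda>p. \<Sum>i = k..m. real (m choose i) * p ^ i * (1 - p) ^ (m - i)) has_real_derivative
        (\<Sum>i = k..m. bpoly m i u - bpoly m (Suc i) u)) (at u)"
    by (rule DERIV_sum) (use assms in \<open>auto intro!: term_deriv\<close>)
  moreover have "(\<Sum>i = k..m. bpoly m i u - bpoly m (Suc i) u) = bpoly m k u"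
  proof -
    have "(\<Sum>i = k..m. bpoly m i u - bpoly m (Suc i) u) = - (\<Sum>i = k..m. bpoly m (Suc i) u - bpoly m i u)"
      by (simp add: sum_negf[symmetric])
    also have "\<dots> = bpoly m k u" using sum_Suc_diff[of k m "\<lambda>i. bpoly m i u"] assms bpoly_big by simp
    finally show ?thesis .
  qed
  ultimately show ?thesis unfolding Bpoly_def[abs_def] by simp
qed

lemma Bpoly_0: "1 \<le> k \<Longrightarrow> Bpoly m k 0 = 0"
  by (auto simp: Bpoly_def intro!: sum.neutral)

lemma Bpoly_1: "k \<le> m \<Longrightarrow> Bpoly m k 1 = 1"
proof -
  assume "k \<le> m"
  then have "{k..m} = insert m {k..<m}" by auto
  then show ?thesis by (auto simp: Bpoly_def intro!: sum.neutral)
qed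

lemma bpoly_nonneg: "0 \<le> u \<Longrightarrow> u \<le> 1 \<Longrightarrow> 0 \<le> bpoly m k u"
  by (simp add: bpoly_def)

lemma bpoly_cont: "isCont (bpoly m k) u"
  unfolding bpoly_def by (intro continuous_intros)

lemma bpoly_le: "0 \<le> u \<Longrightarrow> u \<le> 1 \<Longrightarrow> bpoly m k u \<le> real m * real ((m - 1) choose (k - 1))"
proof -
  assume a: "0 \<le> u" "u \<le> 1"
  have "u ^ (k - 1) * (1 - u) ^ (m - k) \<le> 1" using a by (intro mult_le_one power_le_one) auto
  then show ?thesis unfolding bpoly_def using a
    by (metis mult.assoc mult_left_le of_nat_0_le_iff zero_le_mult_iff)
qed

lemma bpoly_11[simp]: "bpoly 1 1 u = 1" by (simp add: bpoly_def)
lemma Bpoly_11[simp]: "Bpoly 1 1 p = p" by (simp add: Bpoly_def)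

lemma bpoly_reflect: "1 \<le> k \<Longrightarrow> k \<le> m \<Longrightarrow> bpoly m k (1 - u) = bpoly m (m - k + 1) u"
  unfolding bpoly_def using binomial_symmetric[of "k - 1" "m - 1"]
  by (simp add: algebra_simps)



lemma quantile_facts:
  assumes N: "real_distribution N" and u: "0 < u" "u < 1"
  shows "u \<le> cdf N (quantile (cdf N) u)" and "\<And>t. quantile (cdf N) u \<le> t \<longleftrightarrow> u \<le> cdf N t"
proof -
  interpret real_distribution N by fact
  let ?F = "cdf N"
  let ?S = "{x. ?F x \<ge> u}"
  have "eventually (\<lambda>x. ?F x > u) at_top"
    using order_tendstoD(1)[OF cdf_lim_at_top_prob u(2)] .
  then obtain x1 where "?F x1 > u" by (auto simp: eventually_at_top_linorder)
  then have "x1 \<in> ?S" by simp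
  then have ne: "?S \<noteq> {}" by auto
  have "eventually (\<lambda>x. ?F x < u) at_bot"
    using order_tendstoD(2)[OF cdf_lim_at_bot u(1)] .
  then obtain x0 where x0: "\<And>x. x \<le> x0 \<Longrightarrow> ?F x < u" by (auto simp: eventually_at_bot_linorder)
  have bdd: "bdd_below ?S"
  proof
    fix s assume "s \<in> ?S"
    then show "x0 \<le> s" using x0[of s] by force
  qed
  have Fq: "u \<le> ?F (Inf ?S)"
  proof (rule tendsto_lowerbound)
    show "(?F \<longlongrightarrow> ?F (Inf ?S)) (at_right (Inf ?S))"
      using cdf_is_right_cont[of "Inf ?S"] by (simp add: continuous_within)
    show "\<forall>\<^sub>F x in at_right (Inf ?S). u \<le> ?F x"
    proof (rule eventually_at_rightI[where b="Inf ?S + 1"])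
      fix x assume "x \<in> {Inf ?S<..<Inf ?S + 1}"
      then have "Inf ?S < x" by auto
      then obtain s where "s \<in> ?S" "s < x" using cInf_less_iff[OF ne bdd] by auto
      then show "u \<le> ?F x" using cdf_nondecreasing[of s x] by auto
    qed simp
  qed simp
  then show "u \<le> cdf N (quantile (cdf N) u)" by (simp add: quantile_def)
  fix t
  show "quantile (cdf N) u \<le> t \<longleftrightarrow> u \<le> cdf N t"
  proof
    assume "quantile (cdf N) u \<le> t"
    then show "u \<le> cdf N t" using Fq cdf_nondecreasing[of "Inf ?S" t] by (simp add: quantile_def)
  next
    assume "u \<le> cdf N t"
    then show "quantile (cdf N) u \<le> t" unfolding quantile_def by (intro cInf_lower bdd) auto
  qed
qed

lemma quantile_mono:
  assumes N: "real_distribution N" and "0 < u" "u \<le> v" "v < 1"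
  shows "quantile (cdf N) u \<le> quantile (cdf N) v"
proof -
  have "v \<le> cdf N (quantile (cdf N) v)" using quantile_facts(1)[OF N] assms by auto
  then show ?thesis using quantile_facts(2)[OF N, of u] assms by auto
qed

definition Qc :: "(real \<Rightarrow> real) \<Rightarrow> real \<Rightarrow> real" where
  "Qc F u = indicator {0<..<1} u * quantile F u"

lemma Qc_eq: "0 < u \<Longrightarrow> u < 1 \<Longrightarrow> Qc F u = quantile F u"
  by (simp add: Qc_def)

lemma Qc_measurable:
  assumes N: "real_distribution N"
  shows "Qc (cdf N) \<in> borel_measurable borel"
proof -
  have "mono_on {0<..<1} (quantile (cdf N))"
    by (auto intro!: mono_onI quantile_mono[OF N])
  then have "quantile (cdf N) \<in> borel_measurable (restrict_space borel {0<..<1})"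
    by (rule borel_measurable_mono_on_fnc)
  then have "(\<lambda>x. indicator {0<..<1} x *\<^sub>R quantile (cdf N) x) \<in> borel_measurable borel"
    by (subst (asm) borel_measurable_restrict_space_iff) simp_all
  then show ?thesis by (simp add: Qc_def[abs_def])
qed

definition Wm :: "nat \<Rightarrow> nat \<Rightarrow> real measure" where
  "Wm m k = density lborel (\<lambda>u. ennreal (indicator {0<..<1} u * bpoly m k u))"

lemma bpoly_measurable[measurable]: "bpoly m k \<in> borel_measurable borel"
  unfolding bpoly_def by measurable

lemma sets_Wm[simp, measurable_cong]: "sets (Wm m k) = sets borel"
  by (simp add: Wm_def)

lemma space_Wm[simp]: "space (Wm m k) = UNIV"
  by (simp add: Wm_def)

lemma Wm_emeasure:
  assumes k: "1 \<le> k" "k \<le> m" and p: "0 \<le> p" "p \<le> 1" and A[measurable]: "A \<in> sets borel"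
    and Ap: "\<And>u. 0 < u \<Longrightarrow> u < 1 \<Longrightarrow> u \<in> A \<longleftrightarrow> u \<le> p"
  shows "emeasure (Wm m k) A = ennreal (Bpoly m k p)"
proof -
  have "emeasure (Wm m k) A = (\<integral>\<^sup>+ u. ennreal (indicator {0<..<1} u * bpoly m k u) * indicator A u \<partial>lborel)"
    unfolding Wm_def by (subst emeasure_density) auto
  also have "\<dots> = (\<integral>\<^sup>+ u. ennreal (indicator {0..p} u *\<^sub>R bpoly m k u) \<partial>lborel)"
  proof (rule nn_integral_cong_AE)
    have "AE u in lborel. u \<noteq> 0" "AE u in lborel. u \<noteq> 1" by (rule AE_lborel_singleton)+
    then show "AE u in lborel. ennreal (indicator {0<..<1} u * bpoly m k u) * indicator A u =
        ennreal (indicator {0..p} u *\<^sub>R bpoly m k u)"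
    proof eventually_elim
      case (elim u)
      show ?case
      proof (cases "0 < u \<and> u < 1")
        case True
        then have "u \<in> A \<longleftrightarrow> u \<in> {0..p}" using Ap[of u] by auto
        then show ?thesis using True by (simp split: split_indicator)
      next
        case False
        then have "u \<notin> {0<..<1}" "u \<notin> {0..p}" using elim p by auto
        then show ?thesis by simp
      qed
    qed
  qed
  also have "\<dots> = ennreal (integral\<^sup>L lborel (\<lambda>u. indicator {0..p} u *\<^sub>R bpoly m k u))"
  proof (rule nn_integral_eq_integral)
    show "integrable lborel (\<lambda>u. indicator {0..p} u *\<^sub>R bpoly m k u)"
      using borel_integrable_atLeastAtMost'[of 0 p "bpoly m k"]
      by (simp add: set_integrable_def continuous_at_imp_continuous_on bpoly_cont)
    show "AE x in lborel. 0 \<le> indicator {0..p} x *\<^sub>R bpoly m k x"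
      using p by (auto simp: indicator_def bpoly_nonneg)
  qed
  also have "integral\<^sup>L lborel (\<lambda>u. indicator {0..p} u *\<^sub>R bpoly m k u) = Bpoly m k p - Bpoly m k 0"
  proof (rule integral_FTC_atLeastAtMost)
    show "0 \<le> p" by fact
    fix x
    show "(Bpoly m k has_vector_derivative bpoly m k x) (at x within {0..p})"
      using has_field_derivative_at_within[OF Bpoly_deriv[OF k]]
      by (simp add: has_real_derivative_iff_has_vector_derivative)
  next
    show "continuous_on {0..p} (bpoly m k)"
      by (intro continuous_at_imp_continuous_on ballI bpoly_cont)
  qed
  also have "Bpoly m k 0 = 0" using k by (simp add: Bpoly_0)
  finally show ?thesis by simp
qed

lemma Wm_real_distribution:
  assumes k: "1 \<le> k" "k \<le> m"
  shows "real_distribution (Wm m k)"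
proof -
  have "emeasure (Wm m k) UNIV = 1"
    using Wm_emeasure[OF k, of 1 UNIV] k by (simp add: Bpoly_1)
  then have "prob_space (Wm m k)" by (intro prob_spaceI) simp
  then show ?thesis unfolding real_distribution_def real_distribution_axioms_def by simp
qed

lemma distr_Wm_cdf:
  assumes N: "real_distribution N" and k: "1 \<le> k" "k \<le> m"
  shows "real_distribution (distr (Wm m k) borel (Qc (cdf N)))"
    and "cdf (distr (Wm m k) borel (Qc (cdf N))) = (\<lambda>t. Bpoly m k (cdf N t))"
proof -
  interpret W: real_distribution "Wm m k" by (rule Wm_real_distribution[OF k])
  interpret N: real_distribution N by fact
  have [measurable]: "Qc (cdf N) \<in> borel_measurable borel" by (rule Qc_measurable[OF N])
  show "real_distribution (distr (Wm m k) borel (Qc (cdf N)))"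
    by (rule W.real_distribution_distr) simp
  show "cdf (distr (Wm m k) borel (Qc (cdf N))) = (\<lambda>t. Bpoly m k (cdf N t))"
  proof
    fix t
    have "emeasure (distr (Wm m k) borel (Qc (cdf N))) {..t} = emeasure (Wm m k) (Qc (cdf N) -` {..t})"
      by (subst emeasure_distr) auto
    also have "\<dots> = ennreal (Bpoly m k (cdf N t))"
    proof (rule Wm_emeasure[OF k])
      show "0 \<le> cdf N t" "cdf N t \<le> 1" by (auto simp: N.cdf_nonneg N.cdf_bounded_prob)
      show "Qc (cdf N) -` {..t} \<in> sets borel"
        using measurable_sets_borel[OF Qc_measurable[OF N], of "{..t}"] by simp
      fix u :: real assume "0 < u" "u < 1"
      then show "u \<in> Qc (cdf N) -` {..t} \<longleftrightarrow> u \<le> cdf N t"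
        using quantile_facts(2)[OF N, of u t] by (simp add: Qc_eq)
    qed
    finally have "emeasure (distr (Wm m k) borel (Qc (cdf N))) {..t} = ennreal (Bpoly m k (cdf N t))" .
    moreover have "0 \<le> Bpoly m k (cdf N t)"
      unfolding Bpoly_def using N.cdf_nonneg[of t] N.cdf_bounded_prob[of t] by (intro sum_nonneg) auto
    ultimately show "cdf (distr (Wm m k) borel (Qc (cdf N))) t = Bpoly m k (cdf N t)"
      unfolding cdf_def by (simp add: measure_def)
  qed
qed



lemma sorted_nth_le_iff:
  fixes ys :: "real list"
  assumes "sorted ys" "k < length ys"
  shows "ys ! k \<le> t \<longleftrightarrow> k < card {i. i < length ys \<and> ys ! i \<le> t}"
proof
  assume a: "ys ! k \<le> t"
  have "{0..k} \<subseteq> {i. i < length ys \<and> ys ! i \<le> t}"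
  proof
    fix i assume "i \<in> {0..k}"
    then have "i \<le> k" by simp
    then have "ys ! i \<le> ys ! k" using assms sorted_nth_mono by blast
    then show "i \<in> {i. i < length ys \<and> ys ! i \<le> t}" using a \<open>i \<le> k\<close> assms by auto
  qed
  from card_mono[OF _ this] show "k < card {i. i < length ys \<and> ys ! i \<le> t}" by simp
next
  assume a: "k < card {i. i < length ys \<and> ys ! i \<le> t}"
  show "ys ! k \<le> t"
  proof (rule ccontr)
    assume "\<not> ys ! k \<le> t"
    have "{i. i < length ys \<and> ys ! i \<le> t} \<subseteq> {..<k}"
    proof
      fix i assume i: "i \<in> {i. i < length ys \<and> ys ! i \<le> t}"
      show "i \<in> {..<k}"
      proof (rule ccontr)
        assume "i \<notin> {..<k}"
        then have "k \<le> i" by simp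
        then have "ys ! k \<le> ys ! i" using assms i sorted_nth_mono by blast
        then show False using i \<open>\<not> ys ! k \<le> t\<close> by auto
      qed
    qed
    from card_mono[OF _ this] a show False by simp
  qed
qed

lemma order_stat_le_iff:
  assumes "1 \<le> j" "j \<le> m"
  shows "order_stat m j x \<le> t \<longleftrightarrow> j \<le> card {i\<in>{..<m}. x i \<le> t}"
proof -
  let ?ys = "sort (map x [0..<m])"
  have "order_stat m j x \<le> t \<longleftrightarrow> j - 1 < card {i. i < length ?ys \<and> ?ys ! i \<le> t}"
    unfolding order_stat_def using assms by (intro sorted_nth_le_iff) auto
  also have "card {i. i < length ?ys \<and> ?ys ! i \<le> t} = length (filter (\<lambda>v. v \<le> t) ?ys)"
    by (simp add: length_filter_conv_card)
  also have "\<dots> = length (filter (\<lambda>v. v \<le> t) (map x [0..<m]))"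
    by (simp add: filter_sort)
  also have "\<dots> = card {i\<in>{..<m}. x i \<le> t}"
  proof -
    have "{i. i < m \<and> map x [0..<m] ! i \<le> t} = {i\<in>{..<m}. x i \<le> t}" by auto
    then show ?thesis by (simp add: length_filter_conv_card)
  qed
  finally show ?thesis using assms by linarith
qed

definition boxB :: "nat set \<Rightarrow> real \<Rightarrow> nat \<Rightarrow> real set" where
  "boxB S t i = (if i \<in> S then {..t} else {t<..})"

lemma boxB_S:
  assumes S: "S \<subseteq> {..<m}" and x: "x \<in> PiE {..<m} (boxB S t)"
  shows "{i\<in>{..<m}. x i \<le> t} = S"
proof (intro set_eqI iffI)
  fix i assume "i \<in> {i\<in>{..<m}. x i \<le> t}"
  then have i: "i < m" "x i \<le> t" by auto
  have "x i \<in> boxB S t i" using PiE_mem[OF x] i by simp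
  then show "i \<in> S" using i by (auto simp: boxB_def split: if_splits)
next
  fix i assume i: "i \<in> S"
  then have "i < m" using S by auto
  have "x i \<in> boxB S t i" using PiE_mem[OF x] \<open>i < m\<close> by simp
  then show "i \<in> {i\<in>{..<m}. x i \<le> t}" using i \<open>i < m\<close> by (simp add: boxB_def)
qed

lemma order_stat_set_eq:
  assumes "1 \<le> j" "j \<le> m" and that: "sets N = sets borel"
  shows "{x \<in> space (PiM {..<m} (\<lambda>_. N)). order_stat m j x \<le> t} =
         (\<Union>S\<in>{S. S \<subseteq> {..<m} \<and> j \<le> card S}. PiE {..<m} (boxB S t))"
proof -
  have "space N = UNIV" using sets_eq_imp_space_eq[OF that] by simp
  then have sp: "space (PiM {..<m} (\<lambda>_. N)) = PiE {..<m} (\<lambda>_. UNIV)"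
    by (simp add: space_PiM)
  show ?thesis
  proof (rule set_eqI, rule iffI)
    fix x assume "x \<in> {x \<in> space (PiM {..<m} (\<lambda>_. N)). order_stat m j x \<le> t}"
    then have x: "x \<in> PiE {..<m} (\<lambda>_. UNIV)" "order_stat m j x \<le> t" unfolding sp by auto
    define S where "S = {i\<in>{..<m}. x i \<le> t}"
    have "j \<le> card S" using x(2) order_stat_le_iff[OF assms(1,2), of x t] unfolding S_def by blast
    moreover have "S \<subseteq> {..<m}" unfolding S_def by blast
    moreover have "x \<in> PiE {..<m} (boxB S t)"
    proof (rule PiE_I)
      fix i assume "i \<in> {..<m}"
      then show "x i \<in> boxB S t i" unfolding boxB_def S_def by auto
    next
      fix i assume "i \<notin> {..<m}"
      then show "x i = undefined" using x(1) by (rule PiE_arb[rotated])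
    qed
    ultimately show "x \<in> (\<Union>S\<in>{S. S \<subseteq> {..<m} \<and> j \<le> card S}. PiE {..<m} (boxB S t))" by blast
  next
    fix x assume "x \<in> (\<Union>S\<in>{S. S \<subseteq> {..<m} \<and> j \<le> card S}. PiE {..<m} (boxB S t))"
    then obtain S where S: "S \<subseteq> {..<m}" "j \<le> card S" and x: "x \<in> PiE {..<m} (boxB S t)" by blast
    have "x \<in> PiE {..<m} (\<lambda>_. UNIV)" using PiE_mono[of "{..<m}" "boxB S t" "\<lambda>_. UNIV"] x by blast
    then have "x \<in> space (PiM {..<m} (\<lambda>_. N))" unfolding sp .
    moreover have "{i\<in>{..<m}. x i \<le> t} = S" using boxB_S[OF S(1) x] .
    then have "order_stat m j x \<le> t" using order_stat_le_iff[OF assms(1,2), of x t] S by simp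
    ultimately show "x \<in> {x \<in> space (PiM {..<m} (\<lambda>_. N)). order_stat m j x \<le> t}" by blast
  qed
qed

lemma order_stat_measurable:
  assumes "1 \<le> j" "j \<le> m" and N: "sets N = sets borel"
  shows "order_stat m j \<in> borel_measurable (PiM {..<m} (\<lambda>_. N))"
proof (rule borel_measurable_iff_le[THEN iffD2], rule allI)
  fix t
  have "(\<Union>S\<in>{S. S \<subseteq> {..<m} \<and> j \<le> card S}. PiE {..<m} (boxB S t)) \<in> sets (PiM {..<m} (\<lambda>_. N))"
  proof (rule sets.finite_UN)
    show "finite {S. S \<subseteq> {..<m} \<and> j \<le> card S}" by (rule finite_subset[of _ "Pow {..<m}"]) auto
    fix S show "PiE {..<m} (boxB S t) \<in> sets (PiM {..<m} (\<lambda>_. N))"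
      by (rule sets_PiM_I_finite) (simp_all add: N boxB_def)
  qed
  then show "{w \<in> space (PiM {..<m} (\<lambda>_. N)). order_stat m j w \<le> t} \<in> sets (PiM {..<m} (\<lambda>_. N))"
    using order_stat_set_eq[OF assms(1,2) N] by simp
qed

lemma sum_subsets_card:
  fixes p :: real
  assumes "j \<le> m"
  shows "(\<Sum>S\<in>{S. S \<subseteq> {..<m} \<and> j \<le> card S}. p ^ card S * (1 - p) ^ (m - card S))
       = (\<Sum>k = j..m. real (m choose k) * p ^ k * (1 - p) ^ (m - k))"
proof -
  let ?SS = "{S. S \<subseteq> {..<m} \<and> j \<le> card S}"
  have fin: "finite ?SS" by (rule finite_subset[of _ "Pow {..<m}"]) auto
  have img: "card ` ?SS \<subseteq> {j..m}"
  proof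
    fix k assume "k \<in> card ` ?SS"
    then obtain S where "S \<subseteq> {..<m}" "j \<le> card S" "k = card S" by auto
    moreover have "card S \<le> m" using card_mono[OF _ \<open>S \<subseteq> {..<m}\<close>] by simp
    ultimately show "k \<in> {j..m}" by simp
  qed
  have "(\<Sum>S\<in>?SS. p ^ card S * (1 - p) ^ (m - card S))
      = (\<Sum>k\<in>{j..m}. \<Sum>S\<in>{S \<in> ?SS. card S = k}. p ^ card S * (1 - p) ^ (m - card S))"
    by (rule sum.group[OF fin _ img, symmetric]) simp
  also have "\<dots> = (\<Sum>k = j..m. real (m choose k) * p ^ k * (1 - p) ^ (m - k))"
  proof (rule sum.cong[OF refl])
    fix k assume k: "k \<in> {j..m}"
    have eq: "{S \<in> ?SS. card S = k} = {S. S \<subseteq> {..<m} \<and> card S = k}" using k by auto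
    have "(\<Sum>S\<in>{S \<in> ?SS. card S = k}. p ^ card S * (1 - p) ^ (m - card S))
        = (\<Sum>S\<in>{S. S \<subseteq> {..<m} \<and> card S = k}. p ^ k * (1 - p) ^ (m - k))"
      unfolding eq by (rule sum.cong) auto
    also have "\<dots> = real (m choose k) * p ^ k * (1 - p) ^ (m - k)"
      using n_subsets[of "{..<m}" k] by simp
    finally show "(\<Sum>S\<in>{S \<in> ?SS. card S = k}. p ^ card S * (1 - p) ^ (m - card S))
        = real (m choose k) * p ^ k * (1 - p) ^ (m - k)" .
  qed
  finally show ?thesis .
qed

lemma order_stat_cdf:
  assumes N: "real_distribution N" and j: "1 \<le> j" "j \<le> m"
  shows "real_distribution (distr (PiM {..<m} (\<lambda>_. N)) borel (order_stat m j))"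
    and "cdf (distr (PiM {..<m} (\<lambda>_. N)) borel (order_stat m j)) = (\<lambda>t. Bpoly m j (cdf N t))"
proof -
  interpret N: real_distribution N by fact
  interpret P: product_prob_space "\<lambda>_. N" "{..<m}" by unfold_locales
  interpret PF: finite_product_prob_space "\<lambda>_. N" "{..<m}" by unfold_locales simp
  have meas[measurable]: "order_stat m j \<in> borel_measurable (PiM {..<m} (\<lambda>_. N))"
    by (rule order_stat_measurable[OF j]) simp
  show "real_distribution (distr (PiM {..<m} (\<lambda>_. N)) borel (order_stat m j))"
    by (rule P.real_distribution_distr) simp
  show "cdf (distr (PiM {..<m} (\<lambda>_. N)) borel (order_stat m j)) = (\<lambda>t. Bpoly m j (cdf N t))"
  proof
    fix t
    let ?SS = "{S. S \<subseteq> {..<m} \<and> j \<le> card S}"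
    let ?P = "PiM {..<m} (\<lambda>_. N)"
    have sets_box: "PiE {..<m} (boxB S t) \<in> sets ?P" for S
      by (rule sets_PiM_I_finite) (auto simp: boxB_def)
    have "cdf (distr ?P borel (order_stat m j)) t = measure ?P (order_stat m j -` {..t} \<inter> space ?P)"
      unfolding cdf_def by (subst measure_distr) auto
    also have "order_stat m j -` {..t} \<inter> space ?P = {x \<in> space ?P. order_stat m j x \<le> t}" by auto
    also have "\<dots> = (\<Union>S\<in>?SS. PiE {..<m} (boxB S t))"
      by (rule order_stat_set_eq[OF j]) simp
    also have "measure ?P \<dots> = (\<Sum>S\<in>?SS. measure ?P (PiE {..<m} (boxB S t)))"
    proof (rule P.finite_measure_finite_Union)
      show "finite ?SS" by (rule finite_subset[of _ "Pow {..<m}"]) auto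
      show "(\<lambda>S. PiE {..<m} (boxB S t)) ` ?SS \<subseteq> P.events" using sets_box by auto
      show "disjoint_family_on (\<lambda>S. PiE {..<m} (boxB S t)) ?SS"
      proof (unfold disjoint_family_on_def, intro ballI impI)
        fix S S' assume S: "S \<in> ?SS" "S' \<in> ?SS" "S \<noteq> S'"
        show "PiE {..<m} (boxB S t) \<inter> PiE {..<m} (boxB S' t) = {}"
        proof (rule ccontr)
          assume "PiE {..<m} (boxB S t) \<inter> PiE {..<m} (boxB S' t) \<noteq> {}"
          then obtain x where x: "x \<in> PiE {..<m} (boxB S t)" "x \<in> PiE {..<m} (boxB S' t)" by blast
          have "{i\<in>{..<m}. x i \<le> t} = S" using S x(1) boxB_S by blast
          moreover have "{i\<in>{..<m}. x i \<le> t} = S'" using S x(2) boxB_S by blast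
          ultimately show False using S by simp
        qed
      qed
    qed
    also have "\<dots> = (\<Sum>S\<in>?SS. cdf N t ^ card S * (1 - cdf N t) ^ (m - card S))"
    proof (rule sum.cong[OF refl])
      fix S assume S: "S \<in> ?SS"
      have "measure ?P (PiE {..<m} (boxB S t)) = (\<Prod>i\<in>{..<m}. measure N (boxB S t i))"
        by (rule PF.finite_measure_PiM_emb) (auto simp: boxB_def)
      also have "\<dots> = (\<Prod>i\<in>{..<m}. if i \<in> S then cdf N t else 1 - cdf N t)"
      proof (rule prod.cong[OF refl])
        fix i
        have "measure N {t<..} = 1 - cdf N t"
        proof -
          have "{t<..} = space N - {..t}" by auto
          then show ?thesis using N.prob_compl[of "{..t}"] by (simp add: cdf_def)
        qed
        then show "measure N (boxB S t i) = (if i \<in> S then cdf N t else 1 - cdf N t)"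
          unfolding boxB_def by (simp add: cdf_def)
      qed
      also have "\<dots> = cdf N t ^ card S * (1 - cdf N t) ^ (m - card S)"
      proof -
        have S': "S \<subseteq> {..<m}" using S by simp
        have "{..<m} \<inter> {x. x \<in> S} = S" using S' by auto
        moreover have "{..<m} \<inter> - {x. x \<in> S} = {..<m} - S" by auto
        moreover have "card ({..<m} - S) = m - card S" using S' by (simp add: card_Diff_subset finite_subset)
        ultimately show ?thesis by (simp add: prod.If_cases)
      qed
      finally show "measure ?P (PiE {..<m} (boxB S t)) = cdf N t ^ card S * (1 - cdf N t) ^ (m - card S)" .
    qed
    also have "\<dots> = Bpoly m j (cdf N t)"
      unfolding Bpoly_def by (rule sum_subsets_card[OF j(2)])
    finally show "cdf (distr ?P borel (order_stat m j)) t = Bpoly m j (cdf N t)" .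
  qed
qed



lemma h_deriv:
  "((\<lambda>u::real. u ^ Suc a * (1 - u) ^ Suc c) has_real_derivative
     u ^ a * (1 - u) ^ c * (real (Suc a) * (1 - u) - real (Suc c) * u)) (at u)"
proof -
  have "((\<lambda>u::real. u ^ Suc a * (1 - u) ^ Suc c) has_real_derivative
     real (Suc a) * u ^ a * (1 - u) ^ Suc c + u ^ Suc a * (real (Suc c) * (1 - u) ^ c * (- 1))) (at u)"
  proof -
    have d1: "((\<lambda>u::real. u ^ Suc a) has_real_derivative real (Suc a) * u ^ a) (at u)"
      using DERIV_pow[of "Suc a" u] by simp
    have d2: "((\<lambda>u::real. (1 - u) ^ Suc c) has_real_derivative real (Suc c) * (1 - u) ^ c * (- 1)) (at u)"
      using DERIV_chain'[OF DERIV_diff[OF DERIV_const DERIV_ident, of 1 u] DERIV_pow[of "Suc c" "1 - u"]]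
      by (simp add: o_def mult.commute)
    show ?thesis by (rule DERIV_cong[OF DERIV_mult[OF d1 d2]]) (simp add: algebra_simps)
  qed
  moreover have "real (Suc a) * u ^ a * (1 - u) ^ Suc c + u ^ Suc a * (real (Suc c) * (1 - u) ^ c * (- 1))
      = u ^ a * (1 - u) ^ c * (real (Suc a) * (1 - u) - real (Suc c) * u)"
    by (simp add: algebra_simps)
  ultimately show ?thesis by simp
qed

lemma h_up:
  assumes "0 \<le> x" "x \<le> y" "y \<le> real (Suc a) / real (a + c + 2)"
  shows "x ^ Suc a * (1 - x) ^ Suc c \<le> y ^ Suc a * (1 - y) ^ Suc c"
proof (rule DERIV_nonneg_imp_nondecreasing[OF assms(2)])
  fix z assume z: "x \<le> z" "z \<le> y"
  have "real (Suc a) / real (a + c + 2) < 1" by (simp add: divide_less_eq)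
  then have y1: "y < 1" using assms(3) by linarith
  have "z \<le> real (Suc a) / real (a + c + 2)" using z assms(3) by linarith
  then have "z * real (a + c + 2) \<le> real (Suc a)"
    by (simp add: le_divide_eq)
  then have A: "0 \<le> real (Suc a) * (1 - z) - real (Suc c) * z" by (simp add: algebra_simps)
  have B: "0 \<le> z ^ a * (1 - z) ^ c" using z assms y1 by simp
  show "\<exists>d. ((\<lambda>u. u ^ Suc a * (1 - u) ^ Suc c) has_real_derivative d) (at z) \<and> 0 \<le> d"
    using mult_nonneg_nonneg[OF B A] h_deriv by blast
qed

lemma h_down:
  assumes "real (Suc a) / real (a + c + 2) \<le> x" "x \<le> y" "y \<le> 1"
  shows "y ^ Suc a * (1 - y) ^ Suc c \<le> x ^ Suc a * (1 - x) ^ Suc c"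
proof (rule DERIV_nonpos_imp_nonincreasing[OF assms(2)])
  fix z assume z: "x \<le> z" "z \<le> y"
  have x0: "0 \<le> x" using assms(1) by (rule order_trans[rotated]) simp
  have "real (Suc a) / real (a + c + 2) \<le> z" using z assms(1) by linarith
  then have "real (Suc a) \<le> z * real (a + c + 2)"
    by (simp add: divide_le_eq)
  then have A: "real (Suc a) * (1 - z) - real (Suc c) * z \<le> 0" by (simp add: algebra_simps)
  have B: "0 \<le> z ^ a * (1 - z) ^ c" using z assms x0 by simp
  show "\<exists>d. ((\<lambda>u. u ^ Suc a * (1 - u) ^ Suc c) has_real_derivative d) (at z) \<and> d \<le> 0"
    using mult_nonneg_nonpos[OF B A] h_deriv by blast
qed

lemma bpoly_gt1:
  assumes "2 \<le> j" "j \<le> m"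
  shows "\<exists>u. 0 \<le> u \<and> u \<le> 1 \<and> 1 < bpoly m j u"
proof (rule ccontr)
  assume "\<not> ?thesis"
  then have le: "\<And>u. 0 \<le> u \<Longrightarrow> u \<le> 1 \<Longrightarrow> bpoly m j u \<le> 1" by force
  have j1: "1 \<le> j" using assms by simp
  have "((\<lambda>u. 1 - bpoly m j u) has_integral ((1 - Bpoly m j 1) - (0 - Bpoly m j 0))) {0..1}"
  proof (rule fundamental_theorem_of_calculus)
    fix x :: real assume "x \<in> {0..1}"
    have "((\<lambda>u. u - Bpoly m j u) has_real_derivative 1 - bpoly m j x) (at x)"
      by (rule DERIV_diff[OF DERIV_ident Bpoly_deriv[OF j1 assms(2)]])
    then show "((\<lambda>u. u - Bpoly m j u) has_vector_derivative 1 - bpoly m j x) (at x within {0..1})"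
      by (simp add: has_real_derivative_iff_has_vector_derivative[symmetric] has_field_derivative_at_within)
  qed simp
  then have int0: "((\<lambda>u. 1 - bpoly m j u) has_integral 0) (cbox 0 1)"
    using Bpoly_0[OF j1] Bpoly_1[OF assms(2)] by simp
  have "1 - bpoly m j 0 = 0"
  proof (rule has_integral_0_cbox_imp_0[OF _ _ int0])
    show "continuous_on (cbox 0 1) (\<lambda>u. 1 - bpoly m j u)"
      by (intro continuous_at_imp_continuous_on ballI continuous_intros bpoly_cont)
    fix x :: real assume "x \<in> box 0 1"
    then show "0 \<le> 1 - bpoly m j x" using le[of x] by simp
  qed auto
  moreover have "bpoly m j 0 = 0" using assms by (simp add: bpoly_def)
  ultimately show False by simp
qed

lemma cross2:
  assumes "1 < j" "j < m"
  shows "\<exists>c1 c2. 0 < c1 \<and> c1 < c2 \<and> c2 < 1 \<and>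
     (\<forall>u. 0 \<le> u \<and> u \<le> 1 \<longrightarrow> (c1 \<le> u \<and> u \<le> c2 \<longrightarrow> 1 \<le> bpoly m j u) \<and>
                                 (\<not> (c1 \<le> u \<and> u \<le> c2) \<longrightarrow> bpoly m j u \<le> 1))"
proof -
  define a where "a = j - 2"
  define c where "c = m - j - 1"
  have a: "j = a + 2" using assms unfolding a_def by simp
  have c: "m = j + c + 1" using assms unfolding c_def by simp
  define K where "K = real m * real ((m - 1) choose (j - 1))"
  have K: "0 < K" unfolding K_def using assms by simp
  have b_eq: "bpoly m j u = K * (u ^ Suc a * (1 - u) ^ Suc c)" for u
    unfolding bpoly_def K_def a c by (simp add: algebra_simps)
  define md where "md = real (Suc a) / real (a + c + 2)"
  have md: "0 < md" "md < 1" unfolding md_def by auto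
  have up: "bpoly m j x \<le> bpoly m j y" if "0 \<le> x" "x \<le> y" "y \<le> md" for x y
    unfolding b_eq using h_up[OF that[unfolded md_def]] K by simp
  have down: "bpoly m j y \<le> bpoly m j x" if "md \<le> x" "x \<le> y" "y \<le> 1" for x y
    unfolding b_eq using h_down[OF that[unfolded md_def]] K by simp
  obtain u0 where u0: "0 \<le> u0" "u0 \<le> 1" "1 < bpoly m j u0" using bpoly_gt1[of j m] assms by auto
  have bmd: "1 < bpoly m j md"
  proof (cases "u0 \<le> md")
    case True then show ?thesis using up[of u0 md] u0 by simp
  next
    case False then show ?thesis using down[of md u0] u0 by simp
  qed
  have b0: "bpoly m j 0 = 0" and b1: "bpoly m j 1 = 0" unfolding b_eq by simp_all
  have cont: "\<forall>x. a' \<le> x \<and> x \<le> b' \<longrightarrow> isCont (bpoly m j) x" for a' b' by (simp add: bpoly_cont)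
  obtain c1 where c1: "0 \<le> c1" "c1 \<le> md" "bpoly m j c1 = 1"
    using IVT[of "bpoly m j" 0 1 md] b0 bmd md cont by auto
  obtain c2 where c2: "md \<le> c2" "c2 \<le> 1" "bpoly m j c2 = 1"
    using IVT2[of "bpoly m j" 1 1 md] b1 bmd md cont by auto
  have "c1 \<noteq> 0" "c1 \<noteq> md" "c2 \<noteq> md" "c2 \<noteq> 1" using c1 c2 b0 b1 bmd by auto
  then have c1': "0 < c1" "c1 < md" and c2': "md < c2" "c2 < 1" using c1 c2 by auto
  show ?thesis
  proof (intro exI conjI allI impI)
    show "0 < c1" "c1 < c2" "c2 < 1" using c1' c2' by auto
    fix u :: real assume u: "0 \<le> u \<and> u \<le> 1"
    {
      assume "c1 \<le> u \<and> u \<le> c2"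
      then show "1 \<le> bpoly m j u"
      proof (cases "u \<le> md")
        case True then show ?thesis using up[of c1 u] c1 c1' \<open>c1 \<le> u \<and> u \<le> c2\<close> by simp
      next
        case False then show ?thesis using down[of u c2] c2 \<open>c1 \<le> u \<and> u \<le> c2\<close> by simp
      qed
    }
    {
      assume "\<not> (c1 \<le> u \<and> u \<le> c2)"
      then consider "u < c1" | "c2 < u" by linarith
      then show "bpoly m j u \<le> 1"
      proof cases
        case 1 then show ?thesis using up[of u c1] c1 u by simp
      next
        case 2 then show ?thesis using down[of c2 u] c2' c2 u by simp
      qed
    }
  qed
qed

lemma cross1:
  assumes "1 < m"
  shows "\<exists>c. 0 < c \<and> c < 1 \<and>
     (\<forall>u. 0 \<le> u \<and> u \<le> 1 \<longrightarrow> (u \<le> c \<longrightarrow> 1 \<le> bpoly m 1 u) \<and> (c \<le> u \<longrightarrow> bpoly m 1 u \<le> 1))"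
proof -
  have b_eq: "bpoly m 1 u = real m * (1 - u) ^ (m - 1)" for u by (simp add: bpoly_def)
  have dec: "bpoly m 1 y \<le> bpoly m 1 x" if "x \<le> y" "y \<le> 1" for x y
    unfolding b_eq using that by (intro mult_left_mono power_mono) auto
  have b0: "bpoly m 1 0 = real m" and b1: "bpoly m 1 1 = 0" using assms unfolding b_eq by simp_all
  have cont: "\<forall>x. a' \<le> x \<and> x \<le> b' \<longrightarrow> isCont (bpoly m 1) x" for a' b' by (simp add: bpoly_cont)
  obtain c where c: "0 \<le> c" "c \<le> 1" "bpoly m 1 c = 1"
    using IVT2[of "bpoly m 1" 1 1 0] b0 b1 assms cont by auto
  have "c \<noteq> 0" "c \<noteq> 1" using c b0 b1 assms by auto
  then have "0 < c" "c < 1" using c by auto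
  show ?thesis
  proof (intro exI[of _ c] conjI allI impI)
    show "0 < c" "c < 1" by fact+
    fix u :: real assume u: "0 \<le> u \<and> u \<le> 1"
    { assume "u \<le> c" then show "1 \<le> bpoly m 1 u" using dec[of u c] c by simp }
    { assume "c \<le> u" then show "bpoly m 1 u \<le> 1" using dec[of c u] c u by simp }
  qed
qed



lemma xlnx_tendsto: "((\<lambda>x::real. x * ln x) \<longlongrightarrow> 0) (at_right 0)"
proof (rule Lim_null_comparison)
  show "\<forall>\<^sub>F x in at_right 0. norm (x * ln x) \<le> 2 * sqrt x"
  proof (rule eventually_at_rightI[where b=1])
    fix x :: real assume x: "x \<in> {0<..<1}"
    then have x0: "0 < x" and x1: "x < 1" by auto
    have s0: "0 < sqrt x" using x0 by simp
    have "ln (1 / sqrt x) \<le> 1 / sqrt x - 1" using s0 by (intro ln_le_minus_one) simp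
    moreover have "ln (1 / sqrt x) = - ln x / 2" using x0 by (simp add: ln_div ln_sqrt)
    ultimately have l: "- ln x \<le> 2 / sqrt x" by simp
    have "ln x \<le> 0" using x0 x1 by simp
    then have "norm (x * ln x) = x * (- ln x)" using x0 by (simp add: abs_mult abs_of_nonpos)
    also have "\<dots> \<le> x * (2 / sqrt x)" using mult_left_mono[OF l, of x] x0 by simp
    finally have "norm (x * ln x) \<le> x * (2 / sqrt x)" .
    also have "x * (2 / sqrt x) = 2 * sqrt x" using x0
      by (metis real_div_sqrt less_eq_real_def times_divide_eq_right mult.commute)
    finally show "norm (x * ln x) \<le> 2 * sqrt x" .
  qed simp
  have "((\<lambda>x. 2 * sqrt x) \<longlongrightarrow> 2 * sqrt 0) (at_right (0::real))"
    by (intro tendsto_intros)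
  then show "((\<lambda>x. 2 * sqrt x) \<longlongrightarrow> 0) (at_right (0::real))" by simp
qed

lemma isCont_at_right: "isCont f x \<Longrightarrow> (f \<longlongrightarrow> f x) (at_right x)"
  unfolding isCont_def by (rule tendsto_mono[OF at_within_le_at])

lemma isCont_at_left: "isCont f x \<Longrightarrow> (f \<longlongrightarrow> f x) (at_left x)"
  unfolding isCont_def by (rule tendsto_mono[OF at_within_le_at])

lemma Bpoly_isCont: "1 \<le> k \<Longrightarrow> k \<le> m \<Longrightarrow> isCont (Bpoly m k) x"
  by (rule DERIV_isCont[OF Bpoly_deriv])

lemma bpoly_alt: "1 \<le> i \<Longrightarrow> bpoly m i u = real i * real (m choose i) * u ^ (i - 1) * (1 - u) ^ (m - i)"
proof -
  assume i: "1 \<le> i"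
  have "real i * real (m choose i) = real m * real ((m - 1) choose (i - 1))"
    using times_binomial_minus1_eq[of i m] i by (metis of_nat_mult less_le_trans zero_less_one)
  then show ?thesis unfolding bpoly_def by simp
qed

lemma interval_to_ind:
  fixes f :: "real \<Rightarrow> real"
  assumes "set_integrable lborel (einterval 0 1) f" "(LBINT x=0..1. f x) = v"
  shows "integrable lborel (\<lambda>u. indicator {0<..<1} u * f u)"
    "integral\<^sup>L lborel (\<lambda>u. indicator {0<..<1} u * f u) = v"
proof -
  have e: "einterval 0 1 = {0<..<(1::real)}"
    using einterval_eq_Icc[of 0 1] by (simp add: zero_ereal_def one_ereal_def)
  show "integrable lborel (\<lambda>u. indicator {0<..<1} u * f u)"
    using assms(1) unfolding set_integrable_def e by simp
  show "integral\<^sup>L lborel (\<lambda>u. indicator {0<..<1} u * f u) = v"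
    using assms(2) unfolding interval_lebesgue_integral_def set_lebesgue_integral_def e by simp
qed

lemma D1:
  assumes k: "1 \<le> k" "k \<le> m"
  shows "integrable lborel (\<lambda>u. indicator {0<..<1} u * (- ln u * bpoly m k u))"
    "integral\<^sup>L lborel (\<lambda>u. indicator {0<..<1} u * (- ln u * bpoly m k u)) = (\<Sum>i=k..m. 1 / real i)"
proof -
  define P where "P u = (\<Sum>i=k..m. real (m choose i) * u ^ (i - 1) * (1 - u) ^ (m - i))" for u :: real
  define R where "R u = (\<Sum>i=k..m. Bpoly m i u / real i)" for u
  define F where "F u = - ln u * Bpoly m k u + R u" for u
  have BP: "Bpoly m k u = u * P u" for u
    unfolding Bpoly_def P_def sum_distrib_left
  proof (rule sum.cong[OF refl])
    fix i assume "i \<in> {k..m}"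
    then have "i = Suc (i - 1)" using k by auto
    then have "u ^ i = u * u ^ (i - 1)" by (metis power_Suc)
    then show "real (m choose i) * u ^ i * (1 - u) ^ (m - i) = u * (real (m choose i) * u ^ (i - 1) * (1 - u) ^ (m - i))"
      by simp
  qed
  have bP: "(\<Sum>i=k..m. bpoly m i u / real i) = P u" for u
    unfolding P_def
  proof (rule sum.cong[OF refl])
    fix i assume "i \<in> {k..m}"
    then have "1 \<le> i" using k by auto
    then show "bpoly m i u / real i = real (m choose i) * u ^ (i - 1) * (1 - u) ^ (m - i)"
      by (simp add: bpoly_alt)
  qed
  have Rd: "(R has_real_derivative P u) (at u)" for u
  proof -
    have "((\<lambda>x. \<Sum>i=k..m. Bpoly m i x / real i) has_real_derivative (\<Sum>i=k..m. bpoly m i u / real i)) (at u)"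
      by (rule DERIV_sum) (use k in \<open>auto intro!: DERIV_cdivide Bpoly_deriv\<close>)
    then show ?thesis unfolding R_def[abs_def] bP .
  qed
  have h1: "(0::ereal) < 1" by simp
  have hF: "(F has_real_derivative - ln x * bpoly m k x) (at x)" if x: "0 < ereal x" "ereal x < 1" for x
  proof -
    have x0: "0 < x" using x by auto
    have d1: "((\<lambda>u. - ln u) has_real_derivative - (1 / x)) (at x)"
      by (rule DERIV_minus[OF DERIV_ln_divide[OF x0]])
    show "(F has_real_derivative - ln x * bpoly m k x) (at x)"
      unfolding F_def[abs_def]
    proof (rule DERIV_cong[OF DERIV_add[OF DERIV_mult[OF d1 Bpoly_deriv[OF k]] Rd]])
      show "- (1 / x) * Bpoly m k x + bpoly m k x * - ln x + P x = - ln x * bpoly m k x"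
        using x0 by (simp add: BP)
    qed
  qed
  have hc: "isCont (\<lambda>u. - ln u * bpoly m k u) x" if x: "0 < ereal x" "ereal x < 1" for x
  proof -
    have x0: "0 < x" using x by auto
    then show ?thesis by (intro continuous_intros bpoly_cont) auto
  qed
  have hnn: "AE x in lborel. 0 < ereal x \<longrightarrow> ereal x < 1 \<longrightarrow> 0 \<le> - ln x * bpoly m k x"
    by (intro AE_I2 impI mult_nonneg_nonneg bpoly_nonneg) auto
  have RC: "isCont R x" for x unfolding R_def
    by (intro continuous_intros Bpoly_isCont) (use k in auto)
  have hA: "((F \<circ> real_of_ereal) \<longlongrightarrow> 0) (at_right 0)"
  proof -
    have PC: "isCont P x" for x unfolding P_def by (intro continuous_intros)
    have R0: "R 0 = 0" unfolding R_def using k by (auto intro!: sum.neutral simp: Bpoly_0)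
    have "F = (\<lambda>u. - (u * ln u) * P u + R u)" unfolding F_def by (auto simp: BP)
    moreover have "((\<lambda>u. - (u * ln u) * P u + R u) \<longlongrightarrow> - 0 * P 0 + R 0) (at_right 0)"
      by (intro tendsto_intros xlnx_tendsto isCont_at_right PC RC)
    ultimately have "(F \<longlongrightarrow> 0) (at_right 0)" using R0 by simp
    then show "((F \<circ> real_of_ereal) \<longlongrightarrow> 0) (at_right 0)"
      unfolding zero_ereal_def ereal_tendsto_simps1 .
  qed
  have hB: "((F \<circ> real_of_ereal) \<longlongrightarrow> (\<Sum>i=k..m. 1 / real i)) (at_left 1)"
  proof -
    have R1: "R 1 = (\<Sum>i=k..m. 1 / real i)" unfolding R_def using k by (auto intro!: sum.cong simp: Bpoly_1)
    have "isCont F 1" unfolding F_def[abs_def]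
      by (intro continuous_intros Bpoly_isCont RC k) auto
    then have "(F \<longlongrightarrow> F 1) (at_left 1)" by (rule isCont_at_left)
    moreover have "F 1 = (\<Sum>i=k..m. 1 / real i)" unfolding F_def using R1 by simp
    ultimately show "((F \<circ> real_of_ereal) \<longlongrightarrow> (\<Sum>i=k..m. 1 / real i)) (at_left 1)"
      unfolding one_ereal_def ereal_tendsto_simps1 by simp
  qed
  note FTC = interval_integral_FTC_nonneg[OF h1 hF hc hnn hA hB]
  show "integrable lborel (\<lambda>u. indicator {0<..<1} u * (- ln u * bpoly m k u))"
    using interval_to_ind(1)[of "\<lambda>u. - ln u * bpoly m k u"] FTC by blast
  show "integral\<^sup>L lborel (\<lambda>u. indicator {0<..<1} u * (- ln u * bpoly m k u)) = (\<Sum>i=k..m. 1 / real i)"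
    using interval_to_ind(2)[of "\<lambda>u. - ln u * bpoly m k u"] FTC by simp
qed



lemma D2:
  assumes k: "1 \<le> k" "k \<le> m"
  shows "integrable lborel (\<lambda>u. indicator {0<..<1} u * (- ln (1 - u) * bpoly m k u))"
    "integral\<^sup>L lborel (\<lambda>u. indicator {0<..<1} u * (- ln (1 - u) * bpoly m k u)) = (\<Sum>i=m-k+1..m. 1 / real i)"
proof -
  let ?g = "\<lambda>u. indicator {0<..<1} u * (- ln (1 - u) * bpoly m k u)"
  let ?h = "\<lambda>u. indicator {0<..<1} u * (- ln u * bpoly m (m - k + 1) u)"
  have k': "1 \<le> m - k + 1" "m - k + 1 \<le> m" using k by auto
  have eq: "(\<lambda>x. ?g (1 + (-1) * x)) = ?h"
  proof
    fix x :: real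
    have "indicator {0<..<1} (1 - x) = (indicator {0<..<1} x :: real)" by (auto simp: indicator_def)
    then show "?g (1 + (-1) * x) = ?h x" using bpoly_reflect[OF k, of x] by simp
  qed
  have A: "integrable lborel (\<lambda>x. ?g (1 + (-1) * x))" by (subst eq) (rule D1(1)[OF k'])
  show "integrable lborel ?g"
    using lborel_integrable_real_affine_iff[of "-1" ?g 1] A by simp
  have "integral\<^sup>L lborel ?g = \<bar>-1\<bar> *\<^sub>R integral\<^sup>L lborel (\<lambda>x. ?g (1 + (-1) * x))"
    by (rule lborel_integral_real_affine) simp
  also have "\<dots> = (\<Sum>i=m-k+1..m. 1 / real i)" unfolding eq using D1(2)[OF k'] by simp
  finally show "integral\<^sup>L lborel ?g = (\<Sum>i=m-k+1..m. 1 / real i)" .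
qed

lemma D3:
  assumes k: "1 \<le> k" "k \<le> m"
  shows "integrable lborel (\<lambda>u. indicator {0<..<1} u * (u * bpoly m k u))"
    "integral\<^sup>L lborel (\<lambda>u. indicator {0<..<1} u * (u * bpoly m k u)) = real k / (real m + 1)"
proof -
  define R where "R u = (\<Sum>i=k..m. Bpoly (m + 1) (Suc i) u / real (m + 1))" for u
  define F where "F u = u * Bpoly m k u - R u" for u
  have bR: "(\<Sum>i=k..m. bpoly (m + 1) (Suc i) u / real (m + 1)) = Bpoly m k u" for u
    unfolding Bpoly_def by (rule sum.cong[OF refl]) (simp add: bpoly_def)
  have Rd: "(R has_real_derivative Bpoly m k u) (at u)" for u
  proof -
    have "((\<lambda>x. \<Sum>i=k..m. Bpoly (m + 1) (Suc i) x / real (m + 1)) has_real_derivative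
       (\<Sum>i=k..m. bpoly (m + 1) (Suc i) u / real (m + 1))) (at u)"
      by (rule DERIV_sum) (use k in \<open>auto intro!: DERIV_cdivide Bpoly_deriv\<close>)
    then show ?thesis unfolding R_def[abs_def] bR .
  qed
  have RC: "isCont R x" for x unfolding R_def
    by (intro continuous_intros Bpoly_isCont) (use k in auto)
  have h1: "(0::ereal) < 1" by simp
  have hF: "(F has_real_derivative x * bpoly m k x) (at x)" for x
    unfolding F_def[abs_def]
    by (rule DERIV_cong[OF DERIV_diff[OF DERIV_mult[OF DERIV_ident Bpoly_deriv[OF k]] Rd]]) simp
  have hc: "isCont (\<lambda>u. u * bpoly m k u) x" for x
    by (intro continuous_intros bpoly_cont)
  have hnn: "AE x in lborel. 0 < ereal x \<longrightarrow> ereal x < 1 \<longrightarrow> 0 \<le> x * bpoly m k x"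
    by (intro AE_I2 impI mult_nonneg_nonneg bpoly_nonneg) auto
  have FC: "isCont F x" for x unfolding F_def[abs_def]
    by (intro continuous_intros Bpoly_isCont RC k)
  have hA: "((F \<circ> real_of_ereal) \<longlongrightarrow> 0) (at_right 0)"
  proof -
    have "R 0 = 0" unfolding R_def by (auto intro!: sum.neutral simp: Bpoly_0)
    then have "F 0 = 0" unfolding F_def by simp
    then have "(F \<longlongrightarrow> 0) (at_right 0)" using isCont_at_right[OF FC, of 0] by simp
    then show ?thesis unfolding zero_ereal_def ereal_tendsto_simps1 .
  qed
  have hB: "((F \<circ> real_of_ereal) \<longlongrightarrow> real k / (real m + 1)) (at_left 1)"
  proof -
    have "R 1 = (\<Sum>i=k..m. 1 / real (m + 1))" unfolding R_def by (auto intro!: sum.cong simp: Bpoly_1)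
    also have "\<dots> = real (m + 1 - k) / (real m + 1)" using k by simp
    finally have "F 1 = 1 - real (m + 1 - k) / (real m + 1)" unfolding F_def using Bpoly_1[OF k(2)] by simp
    also have "\<dots> = real k / (real m + 1)" using k by (simp add: field_simps of_nat_diff)
    finally have "(F \<longlongrightarrow> real k / (real m + 1)) (at_left 1)" using isCont_at_left[OF FC, of 1] by simp
    then show ?thesis unfolding one_ereal_def ereal_tendsto_simps1 .
  qed
  note FTC = interval_integral_FTC_nonneg[OF h1 hF hc hnn hA hB]
  show "integrable lborel (\<lambda>u. indicator {0<..<1} u * (u * bpoly m k u))"
    using interval_to_ind(1)[of "\<lambda>u. u * bpoly m k u"] FTC by blast
  show "integral\<^sup>L lborel (\<lambda>u. indicator {0<..<1} u * (u * bpoly m k u)) = real k / (real m + 1)"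
    using interval_to_ind(2)[of "\<lambda>u. u * bpoly m k u"] FTC by simp
qed



lemma main_ineq:
  fixes Qf T b :: "real \<Rightarrow> real" and \<alpha> \<beta> :: real
  assumes iQ: "integrable lborel (\<lambda>u. indicator {0<..<1} u * Qf u)"
    and iQb: "integrable lborel (\<lambda>u. indicator {0<..<1} u * (Qf u * b u))"
    and iT: "integrable lborel (\<lambda>u. indicator {0<..<1} u * T u)"
    and iTb: "integrable lborel (\<lambda>u. indicator {0<..<1} u * (T u * b u))"
    and ib: "integrable lborel (\<lambda>u. indicator {0<..<1} u * b u)"
    and ib1: "integral\<^sup>L lborel (\<lambda>u. indicator {0<..<1} u * b u) = 1"
    and pw: "\<And>u. 0 < u \<Longrightarrow> u < 1 \<Longrightarrow> (Qf u - \<alpha> - \<beta> * T u) * (b u - 1) \<le> 0"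
    and \<beta>: "0 \<le> \<beta>"
    and cond: "integral\<^sup>L lborel (\<lambda>u. indicator {0<..<1} u * (T u * b u))
               \<le> integral\<^sup>L lborel (\<lambda>u. indicator {0<..<1} u * T u)"
  shows "integral\<^sup>L lborel (\<lambda>u. indicator {0<..<1} u * (Qf u * b u))
         \<le> integral\<^sup>L lborel (\<lambda>u. indicator {0<..<1} u * Qf u)"
proof -
  let ?i = "indicator {0<..<1} :: real \<Rightarrow> real"
  have i1: "integrable lborel ?i"
    by (rule integrable_real_indicator) auto
  have i1v: "integral\<^sup>L lborel ?i = 1"
    by simp
  let ?L = "\<lambda>u. ?i u * (Qf u * b u) - ?i u * Qf u"
  let ?R = "\<lambda>u. \<alpha> * (?i u * b u - ?i u) + \<beta> * (?i u * (T u * b u) - ?i u * T u)"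
  have "integral\<^sup>L lborel ?L \<le> integral\<^sup>L lborel ?R"
  proof (rule integral_mono)
    show "integrable lborel ?L" using iQb iQ by simp
    show "integrable lborel ?R" using ib i1 iTb iT by simp
    fix u :: real
    show "?L u \<le> ?R u"
    proof (cases "0 < u \<and> u < 1")
      case True
      have A: "(Qf u - \<alpha> - \<beta> * T u) * (b u - 1) \<le> 0" using pw True by auto
      have ind: "?i u = 1" using True by simp
      have B: "Qf u * b u - Qf u - (\<alpha> * (b u - 1) + \<beta> * (T u * b u - T u)) = (Qf u - \<alpha> - \<beta> * T u) * (b u - 1)"
        by (simp add: algebra_simps)
      show ?thesis unfolding ind using A B by (simp only: mult_1)
    next
      case False
      then have ind: "?i u = 0" by simp
      show ?thesis unfolding ind by simp
    qed
  qed
  also have "integral\<^sup>L lborel ?R = \<alpha> * (integral\<^sup>L lborel (\<lambda>u. ?i u * b u) - integral\<^sup>L lborel ?i)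
      + \<beta> * (integral\<^sup>L lborel (\<lambda>u. ?i u * (T u * b u)) - integral\<^sup>L lborel (\<lambda>u. ?i u * T u))"
    using ib i1 iTb iT by simp
  also have "\<dots> \<le> 0" using ib1 i1v cond \<beta> by (simp add: mult_nonneg_nonpos)
  finally have "integral\<^sup>L lborel ?L \<le> 0" .
  moreover have "integral\<^sup>L lborel ?L = integral\<^sup>L lborel (\<lambda>u. ?i u * (Qf u * b u)) - integral\<^sup>L lborel (\<lambda>u. ?i u * Qf u)"
    using iQb iQ by simp
  ultimately show ?thesis by simp
qed

lemma slope_sym: "((p::real) - q) / (x - y) = (q - p) / (y - x)"
  by (metis minus_diff_eq minus_divide_divide)

lemma convex_line:
  fixes G :: "real \<Rightarrow> real"
  assumes conv: "convex_on I G" and a: "a \<in> I" and b: "b \<in> I" and ab: "a < b" and y: "y \<in> I"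
  defines "s \<equiv> (G b - G a) / (b - a)"
  shows "a \<le> y \<Longrightarrow> y \<le> b \<Longrightarrow> G y \<le> G a + s * (y - a)"
    and "y < a \<Longrightarrow> G a + s * (y - a) \<le> G y"
    and "b < y \<Longrightarrow> G a + s * (y - a) \<le> G y"
proof -
  have s': "s = (G a - G b) / (a - b)" unfolding s_def by (rule slope_sym[symmetric])
  {
    assume y1: "a \<le> y" "y \<le> b"
    show "G y \<le> G a + s * (y - a)"
    proof (cases "a = y \<or> y = b")
      case True
      then show ?thesis using ab unfolding s_def by auto
    next
      case False
      then have "a < y" "y < b" using y1 by auto
      from convex_on_slope_le(1)[OF conv a b this]
      have "(G a - G y) / (a - y) \<le> s" unfolding s' .
      moreover have "(G a - G y) / (a - y) = (G y - G a) / (y - a)"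
        by (rule slope_sym)
      ultimately have "(G y - G a) / (y - a) \<le> s" by simp
      then have "G y - G a \<le> s * (y - a)" using \<open>a < y\<close> by (simp add: pos_divide_le_eq)
      then show ?thesis by simp
    qed
  }
  {
    assume y1: "y < a"
    have "(G y - G a) / (y - a) \<le> (G y - G b) / (y - b)"
      using convex_on_slope_le(1)[OF conv y b y1 ab] .
    also have "\<dots> \<le> (G a - G b) / (a - b)"
      using convex_on_slope_le(2)[OF conv y b y1 ab] .
    finally have "(G a - G y) / (a - y) \<le> s" unfolding s' by (simp only: slope_sym[of "G y" "G a" y a])
    then have "G a - G y \<le> s * (a - y)" using y1 by (simp add: pos_divide_le_eq)
    then show "G a + s * (y - a) \<le> G y" by (simp add: algebra_simps)
  }
  {
    assume y1: "b < y"
    have "(G a - G b) / (a - b) \<le> (G a - G y) / (a - y)"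
      using convex_on_slope_le(1)[OF conv a y ab y1] .
    then have "s \<le> (G y - G a) / (y - a)" unfolding s' by (simp only: slope_sym[of "G a" "G y" a y])
    then have "s * (y - a) \<le> G y - G a" using y1 ab by (simp add: pos_le_divide_eq)
    then show "G a + s * (y - a) \<le> G y" by simp
  }
qed

lemma case_lemma:
  fixes G T Qf :: "real \<Rightarrow> real" and I :: "real set"
  assumes conv: "convex_on I G"
    and TI: "\<And>u. 0 < u \<Longrightarrow> u < 1 \<Longrightarrow> T u \<in> I"
    and GT: "\<And>u. 0 < u \<Longrightarrow> u < 1 \<Longrightarrow> G (T u) = Qf u"
    and Tmono: "\<And>u v. 0 < u \<Longrightarrow> u < v \<Longrightarrow> v < 1 \<Longrightarrow> T u < T v"
    and Qmono: "\<And>u v. 0 < u \<Longrightarrow> u \<le> v \<Longrightarrow> v < 1 \<Longrightarrow> Qf u \<le> Qf v"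
    and c: "0 < c1" "c1 < c2" "c2 < 1"
  shows "\<exists>\<alpha> \<beta>. 0 \<le> \<beta> \<and> (\<forall>u. 0 < u \<and> u < 1 \<longrightarrow>
            (c1 \<le> u \<and> u \<le> c2 \<longrightarrow> Qf u \<le> \<alpha> + \<beta> * T u) \<and>
            (\<not> (c1 \<le> u \<and> u \<le> c2) \<longrightarrow> \<alpha> + \<beta> * T u \<le> Qf u))"
proof -
  define a where "a = T c1"
  define b where "b = T c2"
  define s where "s = (G b - G a) / (b - a)"
  have aI: "a \<in> I" and bI: "b \<in> I" unfolding a_def b_def using TI c by auto
  have ab: "a < b" unfolding a_def b_def using Tmono c by auto
  have "G a \<le> G b" unfolding a_def b_def using GT[of c1] GT[of c2] Qmono[of c1 c2] c by auto
  then have s0: "0 \<le> s" unfolding s_def using ab by simp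
  have key: "(c1 \<le> u \<and> u \<le> c2 \<longrightarrow> Qf u \<le> (G a - s * a) + s * T u) \<and>
     (\<not> (c1 \<le> u \<and> u \<le> c2) \<longrightarrow> (G a - s * a) + s * T u \<le> Qf u)" if u: "0 < u" "u < 1" for u
  proof (intro conjI impI)
    have uI: "T u \<in> I" using TI u by auto
    have GTu: "G (T u) = Qf u" using GT u by auto
    {
      assume cu: "c1 \<le> u \<and> u \<le> c2"
      have "a \<le> T u"
        unfolding a_def using cu Tmono[of c1 u] c u by (cases "c1 = u") auto
      moreover have "T u \<le> b"
        unfolding b_def using cu Tmono[of u c2] c u by (cases "c2 = u") auto
      ultimately have "G (T u) \<le> G a + s * (T u - a)"
        using convex_line(1)[OF conv aI bI ab uI] unfolding s_def by blast
      then show "Qf u \<le> G a - s * a + s * T u" using GTu by (simp add: algebra_simps)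
    }
    {
      assume cu: "\<not> (c1 \<le> u \<and> u \<le> c2)"
      then consider "u < c1" | "c2 < u" by linarith
      then have "G a + s * (T u - a) \<le> G (T u)"
      proof cases
        case 1
        then have "T u < a" unfolding a_def using Tmono[of u c1] u c by auto
        then show ?thesis using convex_line(2)[OF conv aI bI ab uI] unfolding s_def by blast
      next
        case 2
        then have "b < T u" unfolding b_def using Tmono[of c2 u] u c by auto
        then show ?thesis using convex_line(3)[OF conv aI bI ab uI] unfolding s_def by blast
      qed
      then show "G a - s * a + s * T u \<le> Qf u" using GTu by (simp add: algebra_simps)
    }
  qed
  show ?thesis
    by (rule exI[of _ "G a - s * a"], rule exI[of _ s]) (use s0 key in blast)
qed

lemma sum_inv_harm:
  assumes "1 \<le> j" "j \<le> Suc m"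
  shows "(\<Sum>i=j..m. 1 / real i) = harm m - harm (j - 1)"
proof -
  define d where "d = m - (j - 1)"
  have d: "m = j - 1 + d" using assms unfolding d_def by simp
  have "(\<Sum>i=j..j - 1 + d. 1 / real i) = harm (j - 1 + d) - harm (j - 1)" for d
  proof (induction d)
    case 0
    then show ?case using assms by simp
  next
    case (Suc d)
    have "{j..j - 1 + Suc d} = insert (j - 1 + Suc d) {j..j - 1 + d}" using assms by auto
    moreover have "j - 1 + Suc d \<notin> {j..j - 1 + d}" by auto
    ultimately have "(\<Sum>i=j..j - 1 + Suc d. 1 / real i) = 1 / real (j - 1 + Suc d) + (\<Sum>i=j..j - 1 + d. 1 / real i)"
      by simp
    also have "\<dots> = harm (j - 1 + Suc d) - harm (j - 1)"
      using Suc.IH by (simp add: harm_Suc inverse_eq_divide)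
    finally show ?case .
  qed
  then show ?thesis using d by simp
qed



lemma bpoly_int:
  assumes k: "1 \<le> k" "k \<le> m"
  shows "integrable lborel (\<lambda>u. indicator {0<..<1} u * bpoly m k u)"
    "integral\<^sup>L lborel (\<lambda>u. indicator {0<..<1} u * bpoly m k u) = 1"
proof -
  interpret W: real_distribution "Wm m k" by (rule Wm_real_distribution[OF k])
  have nn: "AE x in lborel. 0 \<le> indicator {0<..<1} x * bpoly m k x"
    by (intro AE_I2) (auto simp: indicator_def bpoly_nonneg)
  have "integrable (Wm m k) (\<lambda>_. 1::real)" by simp
  then have "integrable lborel (\<lambda>u. (indicator {0<..<1} u * bpoly m k u) *\<^sub>R (1::real))"
    unfolding Wm_def by (subst (asm) integrable_density) (use nn in auto)
  then show "integrable lborel (\<lambda>u. indicator {0<..<1} u * bpoly m k u)" by simp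
  have "W.prob UNIV = 1" using W.prob_space by simp
  then have "integral\<^sup>L (Wm m k) (\<lambda>_. 1::real) = 1" by simp
  moreover have "integral\<^sup>L (Wm m k) (\<lambda>_. 1::real) = integral\<^sup>L lborel (\<lambda>u. (indicator {0<..<1} u * bpoly m k u) *\<^sub>R (1::real))"
    unfolding Wm_def by (rule integral_density) (use nn in auto)
  ultimately show "integral\<^sup>L lborel (\<lambda>u. indicator {0<..<1} u * bpoly m k u) = 1" by simp
qed

lemma two_cross:
  fixes G T Qf :: "real \<Rightarrow> real" and I :: "real set"
  assumes jm: "1 < j" "j < m"
    and conv: "convex_on I G"
    and TI: "\<And>u. 0 < u \<Longrightarrow> u < 1 \<Longrightarrow> T u \<in> I"
    and GT: "\<And>u. 0 < u \<Longrightarrow> u < 1 \<Longrightarrow> G (T u) = Qf u"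
    and Tmono: "\<And>u v. 0 < u \<Longrightarrow> u < v \<Longrightarrow> v < 1 \<Longrightarrow> T u < T v"
    and Qmono: "\<And>u v. 0 < u \<Longrightarrow> u \<le> v \<Longrightarrow> v < 1 \<Longrightarrow> Qf u \<le> Qf v"
    and iQ: "integrable lborel (\<lambda>u. indicator {0<..<1} u * Qf u)"
    and iQb: "integrable lborel (\<lambda>u. indicator {0<..<1} u * (Qf u * bpoly m j u))"
    and iT: "integrable lborel (\<lambda>u. indicator {0<..<1} u * T u)"
    and iTb: "integrable lborel (\<lambda>u. indicator {0<..<1} u * (T u * bpoly m j u))"
    and cond: "integral\<^sup>L lborel (\<lambda>u. indicator {0<..<1} u * (T u * bpoly m j u))
               \<le> integral\<^sup>L lborel (\<lambda>u. indicator {0<..<1} u * T u)"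
  shows "integral\<^sup>L lborel (\<lambda>u. indicator {0<..<1} u * (Qf u * bpoly m j u))
         \<le> integral\<^sup>L lborel (\<lambda>u. indicator {0<..<1} u * Qf u)"
proof -
  obtain c1 where "\<exists>c2. 0 < c1 \<and> c1 < c2 \<and> c2 < 1 \<and>
     (\<forall>u. 0 \<le> u \<and> u \<le> 1 \<longrightarrow> (c1 \<le> u \<and> u \<le> c2 \<longrightarrow> 1 \<le> bpoly m j u) \<and>
                                 (\<not> (c1 \<le> u \<and> u \<le> c2) \<longrightarrow> bpoly m j u \<le> 1))"
    using cross2[OF jm] ..
  then obtain c2 where cc: "0 < c1 \<and> c1 < c2 \<and> c2 < 1 \<and>
     (\<forall>u. 0 \<le> u \<and> u \<le> 1 \<longrightarrow> (c1 \<le> u \<and> u \<le> c2 \<longrightarrow> 1 \<le> bpoly m j u) \<and>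
                                 (\<not> (c1 \<le> u \<and> u \<le> c2) \<longrightarrow> bpoly m j u \<le> 1))"
    ..
  have c: "0 < c1" "c1 < c2" "c2 < 1"
    using conjunct1[OF cc] conjunct1[OF conjunct2[OF cc]] conjunct1[OF conjunct2[OF conjunct2[OF cc]]] by blast+
  have cr: "\<forall>u. 0 \<le> u \<and> u \<le> 1 \<longrightarrow> (c1 \<le> u \<and> u \<le> c2 \<longrightarrow> 1 \<le> bpoly m j u) \<and>
                                 (\<not> (c1 \<le> u \<and> u \<le> c2) \<longrightarrow> bpoly m j u \<le> 1)"
    by (rule conjunct2[OF conjunct2[OF conjunct2[OF cc]]])
  obtain \<alpha> where "\<exists>\<beta>. 0 \<le> \<beta> \<and> (\<forall>u. 0 < u \<and> u < 1 \<longrightarrow>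
            (c1 \<le> u \<and> u \<le> c2 \<longrightarrow> Qf u \<le> \<alpha> + \<beta> * T u) \<and>
            (\<not> (c1 \<le> u \<and> u \<le> c2) \<longrightarrow> \<alpha> + \<beta> * T u \<le> Qf u))"
    using case_lemma[OF conv TI GT Tmono Qmono c] ..
  then obtain \<beta> where ab: "0 \<le> \<beta> \<and> (\<forall>u. 0 < u \<and> u < 1 \<longrightarrow>
            (c1 \<le> u \<and> u \<le> c2 \<longrightarrow> Qf u \<le> \<alpha> + \<beta> * T u) \<and>
            (\<not> (c1 \<le> u \<and> u \<le> c2) \<longrightarrow> \<alpha> + \<beta> * T u \<le> Qf u))"
    ..
  have \<beta>: "0 \<le> \<beta>" by (rule conjunct1[OF ab])
  have ln: "\<forall>u. 0 < u \<and> u < 1 \<longrightarrow>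
            (c1 \<le> u \<and> u \<le> c2 \<longrightarrow> Qf u \<le> \<alpha> + \<beta> * T u) \<and>
            (\<not> (c1 \<le> u \<and> u \<le> c2) \<longrightarrow> \<alpha> + \<beta> * T u \<le> Qf u)" by (rule conjunct2[OF ab])
  have jm': "1 \<le> j" "j \<le> m" using jm by auto
  show ?thesis
  proof (rule main_ineq[OF iQ iQb iT iTb bpoly_int[OF jm'] _ \<beta> cond])
    fix u :: real assume u: "0 < u" "u < 1"
    show "(Qf u - \<alpha> - \<beta> * T u) * (bpoly m j u - 1) \<le> 0"
    proof (cases "c1 \<le> u \<and> u \<le> c2")
      case True
      moreover have "Qf u \<le> \<alpha> + \<beta> * T u" using ln u True by simp
      moreover have "1 \<le> bpoly m j u" using cr u True by simp
      ultimately have "Qf u - \<alpha> - \<beta> * T u \<le> 0" "0 \<le> bpoly m j u - 1" by auto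
      then show ?thesis by (rule mult_nonpos_nonneg)
    next
      case False
      moreover have "\<alpha> + \<beta> * T u \<le> Qf u" using ln u False by simp
      moreover have "bpoly m j u \<le> 1" using cr u False by simp
      ultimately have "0 \<le> Qf u - \<alpha> - \<beta> * T u" "bpoly m j u - 1 \<le> 0" by auto
      then show ?thesis by (rule mult_nonneg_nonpos)
    qed
  qed
qed

lemma one_cross:
  fixes Qf :: "real \<Rightarrow> real"
  assumes m: "1 < m"
    and Qmono: "\<And>u v. 0 < u \<Longrightarrow> u \<le> v \<Longrightarrow> v < 1 \<Longrightarrow> Qf u \<le> Qf v"
    and iQ: "integrable lborel (\<lambda>u. indicator {0<..<1} u * Qf u)"
    and iQb: "integrable lborel (\<lambda>u. indicator {0<..<1} u * (Qf u * bpoly m 1 u))"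
  shows "integral\<^sup>L lborel (\<lambda>u. indicator {0<..<1} u * (Qf u * bpoly m 1 u))
         \<le> integral\<^sup>L lborel (\<lambda>u. indicator {0<..<1} u * Qf u)"
proof -
  obtain c where cc: "0 < c \<and> c < 1 \<and>
     (\<forall>u. 0 \<le> u \<and> u \<le> 1 \<longrightarrow> (u \<le> c \<longrightarrow> 1 \<le> bpoly m 1 u) \<and> (c \<le> u \<longrightarrow> bpoly m 1 u \<le> 1))"
    using cross1[OF m] ..
  have c: "0 < c" "c < 1" using conjunct1[OF cc] conjunct1[OF conjunct2[OF cc]] by blast+
  have cr: "\<forall>u. 0 \<le> u \<and> u \<le> 1 \<longrightarrow> (u \<le> c \<longrightarrow> 1 \<le> bpoly m 1 u) \<and> (c \<le> u \<longrightarrow> bpoly m 1 u \<le> 1)"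
    by (rule conjunct2[OF conjunct2[OF cc]])
  have m': "1 \<le> (1::nat)" "1 \<le> m" using m by auto
  have iT: "integrable lborel (\<lambda>u. indicator {0<..<1} u * (\<lambda>_. 0::real) u)" by simp
  have iTb: "integrable lborel (\<lambda>u. indicator {0<..<1} u * ((\<lambda>_. 0::real) u * bpoly m 1 u))" by simp
  show ?thesis
  proof (rule main_ineq[OF iQ iQb iT iTb bpoly_int[OF m'], where \<alpha>="Qf c" and \<beta>=0])
    fix u :: real assume u: "0 < u" "u < 1"
    show "(Qf u - Qf c - 0 * 0) * (bpoly m 1 u - 1) \<le> 0"
    proof (cases "u \<le> c")
      case True
      have "Qf u \<le> Qf c" using Qmono[of u c] u c True by simp
      moreover have "1 \<le> bpoly m 1 u" using cr u True by simp
      ultimately have "Qf u - Qf c - 0 * 0 \<le> 0" "0 \<le> bpoly m 1 u - 1" by auto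
      then show ?thesis by (rule mult_nonpos_nonneg)
    next
      case False
      have "Qf c \<le> Qf u" using Qmono[of c u] u c False by simp
      moreover have "bpoly m 1 u \<le> 1" using cr u False by simp
      ultimately have "0 \<le> Qf u - Qf c - 0 * 0" "bpoly m 1 u - 1 \<le> 0" by auto
      then show ?thesis by (rule mult_nonneg_nonpos)
    qed
  qed simp_all
qed



lemma bpoly_Suc0[simp]: "bpoly (Suc 0) (Suc 0) u = 1" by (simp add: bpoly_def)
lemma Bpoly_Suc0[simp]: "Bpoly (Suc 0) (Suc 0) u = u" by (simp add: Bpoly_def)

theorem corollary11:
  fixes M :: "'a measure" and X :: "'a \<Rightarrow> real" and j m :: nat
  assumes "prob_space M"
    and "X \<in> borel_measurable M"
    and "integrable M X"
    and "1 \<le> j" and "j \<le> m"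
    and "(convex_on {0<..<1} (quantile (cdf (distr M borel X)))
            \<and> 1/2 \<ge> real j / (real m + 1))
       \<or> (convex_on UNIV (quantile (cdf (distr M borel X)) \<circ> logistic)
            \<and> Digamma (real j) - Digamma (real m - real j + 1) \<le> 0)
       \<or> (convex_on {0<..} (\<lambda>x. quantile (cdf (distr M borel X)) (1 - exp (- x)))
            \<and> 1 \<ge> (\<Sum>k = m - j + 1..m. 1 / real k))
       \<or> (convex_on {..<0} (\<lambda>x. quantile (cdf (distr M borel X)) (exp x))
            \<and> 1 \<le> (\<Sum>k = j..m. 1 / real k))"
  shows "integral\<^sup>L (PiM {..<m} (\<lambda>_. distr M borel X)) (order_stat m j)
           \<le> integral\<^sup>L M X"
proof -
  interpret M: prob_space M by fact
  let ?\<mu> = "distr M borel X"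
  let ?i = "indicator {0<..<1} :: real \<Rightarrow> real"
  have Xm[measurable]: "X \<in> borel_measurable M" by fact
  have \<mu>: "real_distribution ?\<mu>" by (rule M.real_distribution_distr) simp
  define F where "F = cdf ?\<mu>"
  define Qf where "Qf = Qc F"
  have Qf_meas[measurable]: "Qf \<in> borel_measurable borel"
    unfolding Qf_def F_def by (rule Qc_measurable[OF \<mu>])
  have jm: "1 \<le> j" "j \<le> m" by fact+
  have one: "1 \<le> (1::nat)" by simp
  have eq1: "?\<mu> = distr (Wm 1 1) borel Qf"
    unfolding Qf_def F_def
    by (rule cdf_unique[OF \<mu> distr_Wm_cdf(1)[OF \<mu> one one]]) (subst distr_Wm_cdf(2)[OF \<mu> one one], simp add: Bpoly_def)
  have eqj: "distr (PiM {..<m} (\<lambda>_. ?\<mu>)) borel (order_stat m j) = distr (Wm m j) borel Qf"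
    unfolding Qf_def F_def
    by (rule cdf_unique[OF order_stat_cdf(1)[OF \<mu> jm] distr_Wm_cdf(1)[OF \<mu> jm]])
       (simp add: order_stat_cdf(2)[OF \<mu> jm] distr_Wm_cdf(2)[OF \<mu> jm])
  have osm[measurable]: "order_stat m j \<in> borel_measurable (PiM {..<m} (\<lambda>_. ?\<mu>))"
    by (rule order_stat_measurable[OF jm]) simp
  have nn: "AE x in lborel. 0 \<le> ?i x * bpoly k l x" for k l
    by (intro AE_I2) (auto simp: indicator_def bpoly_nonneg)
  have Wint: "integral\<^sup>L (Wm k l) Qf = integral\<^sup>L lborel (\<lambda>u. ?i u * (Qf u * bpoly k l u))" for k l
  proof -
    have "integral\<^sup>L (Wm k l) Qf = integral\<^sup>L lborel (\<lambda>u. (?i u * bpoly k l u) *\<^sub>R Qf u)"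
      unfolding Wm_def by (rule integral_density) (use nn in auto)
    also have "\<dots> = integral\<^sup>L lborel (\<lambda>u. ?i u * (Qf u * bpoly k l u))"
      by (rule Bochner_Integration.integral_cong) auto
    finally show ?thesis .
  qed
  have LHS: "integral\<^sup>L (PiM {..<m} (\<lambda>_. ?\<mu>)) (order_stat m j) = integral\<^sup>L lborel (\<lambda>u. ?i u * (Qf u * bpoly m j u))"
  proof -
    have "integral\<^sup>L (PiM {..<m} (\<lambda>_. ?\<mu>)) (order_stat m j)
        = integral\<^sup>L (distr (PiM {..<m} (\<lambda>_. ?\<mu>)) borel (order_stat m j)) (\<lambda>x. x)"
      by (subst integral_distr) auto
    also have "\<dots> = integral\<^sup>L (distr (Wm m j) borel Qf) (\<lambda>x. x)" by (simp only: eqj)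
    also have "\<dots> = integral\<^sup>L (Wm m j) Qf" by (subst integral_distr) auto
    finally show ?thesis using Wint by simp
  qed
  have RHS: "integral\<^sup>L M X = integral\<^sup>L lborel (\<lambda>u. ?i u * Qf u)"
  proof -
    have "integral\<^sup>L M X = integral\<^sup>L ?\<mu> (\<lambda>x. x)" by (subst integral_distr) auto
    also have "\<dots> = integral\<^sup>L (distr (Wm 1 1) borel Qf) (\<lambda>x. x)" by (simp only: eq1[symmetric])
    also have "\<dots> = integral\<^sup>L (Wm 1 1) Qf" by (subst integral_distr) auto
    finally show ?thesis using Wint[of 1 1] by simp
  qed
  have iQ: "integrable lborel (\<lambda>u. ?i u * Qf u)"
  proof -
    have "integrable ?\<mu> (\<lambda>x. x)" using assms(3) by (subst integrable_distr_eq) auto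
    then have "integrable (distr (Wm 1 1) borel Qf) (\<lambda>x. x)" by (simp only: eq1)
    then have "integrable (Wm 1 1) Qf" by (subst (asm) integrable_distr_eq) auto
    then have "integrable lborel (\<lambda>u. (?i u * bpoly 1 1 u) *\<^sub>R Qf u)"
      unfolding Wm_def by (subst (asm) integrable_density) (use nn in auto)
    then show ?thesis by simp
  qed
  have iQb: "integrable lborel (\<lambda>u. ?i u * (Qf u * bpoly m j u))"
  proof (rule Bochner_Integration.integrable_bound)
    define K where "K = real m * real ((m - 1) choose (j - 1))"
    show "integrable lborel (\<lambda>u. K * (?i u * Qf u))" using iQ by simp
    show "(\<lambda>u. ?i u * (Qf u * bpoly m j u)) \<in> borel_measurable lborel" by measurable
    show "AE u in lborel. norm (?i u * (Qf u * bpoly m j u)) \<le> norm (K * (?i u * Qf u))"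
    proof (intro AE_I2)
      fix u :: real
      show "norm (?i u * (Qf u * bpoly m j u)) \<le> norm (K * (?i u * Qf u))"
      proof (cases "0 < u \<and> u < 1")
        case True
        then have b: "0 \<le> bpoly m j u" "bpoly m j u \<le> K" unfolding K_def using bpoly_nonneg bpoly_le by auto
        have "bpoly m j u * \<bar>Qf u\<bar> \<le> K * \<bar>Qf u\<bar>" using b by (intro mult_right_mono) auto
        then have "\<bar>Qf u\<bar> * bpoly m j u \<le> K * \<bar>Qf u\<bar>" by (simp only: mult.commute)
        then show ?thesis using True b by (simp add: abs_mult)
      next
        case False
        then have "?i u = 0" by simp
        then show ?thesis by simp
      qed
    qed
  qed
  have Qeq: "Qf u = quantile F u" if "0 < u" "u < 1" for u
    unfolding Qf_def using that by (rule Qc_eq)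
  have Qmono: "Qf u \<le> Qf v" if "0 < u" "u \<le> v" "v < 1" for u v
    using quantile_mono[OF \<mu>, of u v] that Qeq[of u] Qeq[of v] unfolding F_def by simp
  have A6: "(convex_on {0<..<1} (quantile F) \<and> 1/2 \<ge> real j / (real m + 1))
       \<or> (convex_on UNIV (quantile F \<circ> logistic) \<and> Digamma (real j) - Digamma (real m - real j + 1) \<le> 0)
       \<or> (convex_on {0<..} (\<lambda>x. quantile F (1 - exp (- x))) \<and> 1 \<ge> (\<Sum>k = m - j + 1..m. 1 / real k))
       \<or> (convex_on {..<0} (\<lambda>x. quantile F (exp x)) \<and> 1 \<le> (\<Sum>k = j..m. 1 / real k))"
    using assms(6) unfolding F_def .
  have D1j: "integrable lborel (\<lambda>u. ?i u * (- ln u * bpoly m j u))"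
      "integral\<^sup>L lborel (\<lambda>u. ?i u * (- ln u * bpoly m j u)) = (\<Sum>i=j..m. 1 / real i)"
    using D1[OF jm] by auto
  have D11: "integrable lborel (\<lambda>u. ?i u * (- ln u))"
      "integral\<^sup>L lborel (\<lambda>u. ?i u * (- ln u)) = 1"
    using D1[OF one one] by auto
  have D2j: "integrable lborel (\<lambda>u. ?i u * (- ln (1 - u) * bpoly m j u))"
      "integral\<^sup>L lborel (\<lambda>u. ?i u * (- ln (1 - u) * bpoly m j u)) = (\<Sum>i=m-j+1..m. 1 / real i)"
    using D2[OF jm] by auto
  have D21: "integrable lborel (\<lambda>u. ?i u * (- ln (1 - u)))"
      "integral\<^sup>L lborel (\<lambda>u. ?i u * (- ln (1 - u))) = 1"
    using D2[OF one one] by auto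
  have hj: "(\<Sum>i=j..m. 1 / real i) = harm m - harm (j - 1)"
    using sum_inv_harm[of j m] jm by simp
  have hmj: "(\<Sum>i=m-j+1..m. 1 / real i) = harm m - harm (m - j)"
    using sum_inv_harm[of "m - j + 1" m] jm by simp
  have main: "integral\<^sup>L lborel (\<lambda>u. ?i u * (Qf u * bpoly m j u)) \<le> integral\<^sup>L lborel (\<lambda>u. ?i u * Qf u)"
  proof (cases "j = 1")
    case jone: True
    show ?thesis
    proof (cases "m = 1")
      case True
      then show ?thesis using jone by simp
    next
      case False
      then have m1: "1 < m" using jm by simp
      have iQb1: "integrable lborel (\<lambda>u. ?i u * (Qf u * bpoly m 1 u))" using iQb jone by simp
      show ?thesis using one_cross[OF m1 Qmono iQ iQb1] jone by simp
    qed
  next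
    case False
    then have j1: "1 < j" using jm by simp
    show ?thesis
    proof (cases "j = m")
      case True
      have m2: "2 \<le> m" using j1 True by simp
      from A6 have False
      proof (elim disjE conjE)
        assume "real j / (real m + 1) \<le> 1/2"
        then show False using True m2 by (simp add: field_simps)
      next
        assume d: "Digamma (real j) - Digamma (real m - real j + 1) \<le> 0"
        have "real j = of_nat (Suc (j - 1))" using jm by simp
        then have "Digamma (real j) = harm (j - 1) - euler_mascheroni"
          by (simp only: Digamma_of_nat)
        moreover have "Digamma (real m - real j + 1) = (- euler_mascheroni :: real)" using True by simp
        moreover have "harm (j - 1) > (0::real)" using j1 by (intro harm_pos) simp
        ultimately show False using d by linarith
      next
        assume d: "1 \<ge> (\<Sum>k = m - j + 1..m. 1 / real k)"
        have "(\<Sum>k\<in>{1,2}. 1 / real k) \<le> (\<Sum>k=1..m. 1 / real k)"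
          by (rule sum_mono2) (use m2 in auto)
        moreover have "(\<Sum>k\<in>{1::nat,2}. 1 / real k) = 3/2" by simp
        moreover have "m - j + 1 = 1" using True by simp
        ultimately show False using d by simp
      next
        assume d: "1 \<le> (\<Sum>k = j..m. 1 / real k)"
        then show False using True m2 by simp
      qed
      then show ?thesis ..
    next
      case False
      then have jm2: "j < m" using jm by simp
      from A6 show ?thesis
      proof (elim disjE conjE)
        assume conv: "convex_on {0<..<1} (quantile F)" and c: "real j / (real m + 1) \<le> 1/2"
        have iT: "integrable lborel (\<lambda>u. ?i u * u)" using D3(1)[OF one one] by simp
        have iTb: "integrable lborel (\<lambda>u. ?i u * (u * bpoly m j u))" using D3(1)[OF jm] .
        have cond: "integral\<^sup>L lborel (\<lambda>u. ?i u * (u * bpoly m j u)) \<le> integral\<^sup>L lborel (\<lambda>u. ?i u * u)"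
        proof -
          have I1: "integral\<^sup>L lborel (\<lambda>u. ?i u * u) = 1/2" using D3(2)[OF one one] by simp
          show ?thesis unfolding D3(2)[OF jm] I1 using c .
        qed
        show ?thesis
          by (rule two_cross[OF j1 jm2 conv _ _ _ Qmono iQ iQb iT iTb cond]) (auto simp: Qeq)
      next
        assume conv: "convex_on UNIV (quantile F \<circ> logistic)"
          and c: "Digamma (real j) - Digamma (real m - real j + 1) \<le> 0"
        let ?T = "\<lambda>u::real. ln u - ln (1 - u)"
        have e1: "(\<lambda>u. ?i u * ?T u) = (\<lambda>u. ?i u * (- ln (1 - u)) - ?i u * (- ln u))"
          by (auto simp: algebra_simps)
        have e2: "(\<lambda>u. ?i u * (?T u * bpoly m j u)) = (\<lambda>u. ?i u * (- ln (1 - u) * bpoly m j u) - ?i u * (- ln u * bpoly m j u))"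
          by (auto simp: algebra_simps)
        have iT: "integrable lborel (\<lambda>u. ?i u * ?T u)" unfolding e1 using D11 D21 by simp
        have iTb: "integrable lborel (\<lambda>u. ?i u * (?T u * bpoly m j u))" unfolding e2 using D1j D2j by simp
        have "Digamma (real j) = harm (j - 1) - (euler_mascheroni :: real)"
        proof -
          have "real j = of_nat (Suc (j - 1))" using jm by simp
          then show ?thesis by (simp only: Digamma_of_nat)
        qed
        moreover have "Digamma (real m - real j + 1) = harm (m - j) - (euler_mascheroni :: real)"
        proof -
          have "real m - real j + 1 = of_nat (Suc (m - j))" using jm by (simp add: of_nat_diff)
          then show ?thesis by (simp only: Digamma_of_nat)
        qed
        ultimately have hh: "harm (j - 1) - harm (m - j) \<le> (0::real)" using c by simp
        have cond: "integral\<^sup>L lborel (\<lambda>u. ?i u * (?T u * bpoly m j u)) \<le> integral\<^sup>L lborel (\<lambda>u. ?i u * ?T u)"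
          unfolding e1 e2 using D11 D21 D1j D2j hj hmj hh by simp
        have Tmono: "?T u < ?T v" if "0 < u" "u < v" "v < 1" for u v
        proof -
          have "ln u < ln v" using that by simp
          moreover have "ln (1 - v) < ln (1 - u)" using that by simp
          ultimately show ?thesis by simp
        qed
        have GT: "(quantile F \<circ> logistic) (?T u) = Qf u" if "0 < u" "u < 1" for u :: real
        proof -
          have e: "exp (- (ln u - ln (1 - u))) = (1 - u) / u" using that by (simp add: exp_diff)
          have "logistic (?T u) = 1 / (1 + (1 - u) / u)" unfolding logistic_def e ..
          also have "\<dots> = u" using that by (simp add: field_simps)
          finally have "logistic (?T u) = u" .
          then show ?thesis using Qeq that by simp
        qed
        show ?thesis
          by (rule two_cross[OF j1 jm2 conv _ GT Tmono Qmono iQ iQb iT iTb cond]) simp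
      next
        assume conv: "convex_on {0<..} (\<lambda>x. quantile F (1 - exp (- x)))"
          and c: "1 \<ge> (\<Sum>k = m - j + 1..m. 1 / real k)"
        have cond: "integral\<^sup>L lborel (\<lambda>u. ?i u * (- ln (1 - u) * bpoly m j u)) \<le> integral\<^sup>L lborel (\<lambda>u. ?i u * (- ln (1 - u)))"
          using D2j D21 c by simp
        have Tmono: "- ln (1 - u) < - ln (1 - v)" if "0 < u" "u < v" "v < 1" for u v :: real
          using that by simp
        have GT: "quantile F (1 - exp (- (- ln (1 - u)))) = Qf u" if "0 < u" "u < 1" for u :: real
          using that Qeq by simp
        have TI: "- ln (1 - u) \<in> {0<..}" if "0 < u" "u < 1" for u :: real
          using that by simp
        show ?thesis
          by (rule two_cross[OF j1 jm2 conv TI GT Tmono Qmono iQ iQb D21(1) D2j(1) cond])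
      next
        assume conv: "convex_on {..<0} (\<lambda>x. quantile F (exp x))"
          and c: "1 \<le> (\<Sum>k = j..m. 1 / real k)"
        have e1: "(\<lambda>u. ?i u * ln u) = (\<lambda>u. - (?i u * (- ln u)))" by auto
        have e2: "(\<lambda>u. ?i u * (ln u * bpoly m j u)) = (\<lambda>u. - (?i u * (- ln u * bpoly m j u)))" by auto
        have iT: "integrable lborel (\<lambda>u. ?i u * ln u)" unfolding e1 using D11 by simp
        have iTb: "integrable lborel (\<lambda>u. ?i u * (ln u * bpoly m j u))" unfolding e2 using D1j by simp
        have cond: "integral\<^sup>L lborel (\<lambda>u. ?i u * (ln u * bpoly m j u)) \<le> integral\<^sup>L lborel (\<lambda>u. ?i u * ln u)"
          unfolding e1 e2 using D11 D1j c by simp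
        have Tmono: "ln u < ln v" if "0 < u" "u < v" "v < 1" for u v :: real
          using that by simp
        have GT: "quantile F (exp (ln u)) = Qf u" if "0 < u" "u < 1" for u :: real
          using that Qeq by simp
        have TI: "ln u \<in> {..<0}" if "0 < u" "u < 1" for u :: real
          using that by simp
        show ?thesis
          by (rule two_cross[OF j1 jm2 conv TI GT Tmono Qmono iQ iQb iT iTb cond])
      qed
    qed
  qed
  show ?thesis using main LHS RHS by simp
qed


end
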